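(* Let $x,y$ be non-commuting indeterminates and $C=xyx^{-1}y^{-1}$. Let $(R_n)_{n\in\mathbb Z}$ satisfy $$R_{2n}CR_{2n-2}=1+R_{2n-1},\qquad R_{2n+1}CR_{2n-1}=1+R_{2n}^4\qquad(n\in\mathbb Z),$$ with $R_0=yxy^{-1}$ and $R_1=y$, and set $u_n=R_{2n}$. Let $$y_1=(1+y)x^{-1}yx^{-1}y^{-1},$$ $$y_2=\big(x^2+(1+y)x^{-2}(1+y)\big)y^{-1}x^{-1}yx^{-1}y^{-1},$$ $$y_3=\big(x^3+(1+y)x^{-1}\big)x^{-1}y^{-1}.$$ Then for every $n\ge0$, $u_nu_0^{-1}$ equals the sum over all Motzkin paths of height at most $1$ from $(0,0)$ to $(n,0)$ of their weights. Such a path is a sequence of points in $\mathbb Z\times\{0,1\}$ in which each step is $(a,h)\to(a+1,h)$ (horizontal) or $(a,h)\to(a+1,1-h)$ (up or down). The weight of a path is the product, in the order of the steps, of: - $y_1$ for each horizontal step at height $0$; - $1$ for each up step; - $y_2$ for each down step; - $y_3$ for each horizontal step at height $1$.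
   Context: Work in the free skew field (non-commutative rational functions) over $\mathbb C$ generated by $x,y$. *)

theory Defs
  imports Complex_Main
begin

text \<open>Noncommutative polynomials in two variables over the complex numbers:
  finitely supported coefficient functions on words over the alphabet {x,y}
  (False = x, True = y).\<close>

type_synonym ncword = "bool list"
type_synonym ncpoly = "ncword \<Rightarrow> complex"

definition is_ncpoly :: "ncpoly \<Rightarrow> bool" where
  "is_ncpoly p \<longleftrightarrow> finite {w. p w \<noteq> 0}"

definition ncmult :: "ncpoly \<Rightarrow> ncpoly \<Rightarrow> ncpoly" where
  "ncmult p q = (\<lambda>w. \<Sum>k\<le>length w. p (take k w) * q (drop k w))"

definition full_matrix :: "nat \<Rightarrow> (nat \<Rightarrow> nat \<Rightarrow> ncpoly) \<Rightarrow> bool" where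
  "full_matrix n A \<longleftrightarrow>
     \<not> (\<exists>r P Q. r < n \<and>
          (\<forall>i<n. \<forall>k<r. is_ncpoly (P i k)) \<and> (\<forall>k<r. \<forall>j<n. is_ncpoly (Q k j)) \<and>
          (\<forall>i<n. \<forall>j<n. A i j = (\<lambda>w. \<Sum>k<r. ncmult (P i k) (Q k j) w)))"

definition word_val :: "'a::ring_1 \<Rightarrow> 'a \<Rightarrow> ncword \<Rightarrow> 'a" where
  "word_val x y w = prod_list (map (\<lambda>b. if b then y else x) w)"

definition nceval :: "(complex \<Rightarrow> 'a::ring_1) \<Rightarrow> 'a \<Rightarrow> 'a \<Rightarrow> ncpoly \<Rightarrow> 'a" where
  "nceval \<iota> x y p = (\<Sum>w\<in>{w. p w \<noteq> 0}. \<iota> (p w) * word_val x y w)"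

definition invertible_over :: "nat \<Rightarrow> (nat \<Rightarrow> nat \<Rightarrow> 'a::ring_1) \<Rightarrow> bool" where
  "invertible_over n M \<longleftrightarrow> (\<exists>N.
      (\<forall>i<n. \<forall>j<n. (\<Sum>k<n. M i k * N k j) = (if i = j then 1 else 0)) \<and>
      (\<forall>i<n. \<forall>j<n. (\<Sum>k<n. N i k * M k j) = (if i = j then 1 else 0)))"

inductive_set division_closure :: "'a::division_ring set \<Rightarrow> 'a set" for S where
  gen: "a \<in> S \<Longrightarrow> a \<in> division_closure S"
| add: "a \<in> division_closure S \<Longrightarrow> b \<in> division_closure S \<Longrightarrow> a + b \<in> division_closure S"
| neg: "a \<in> division_closure S \<Longrightarrow> - a \<in> division_closure S"
| mult: "a \<in> division_closure S \<Longrightarrow> b \<in> division_closure S \<Longrightarrow> a * b \<in> division_closure S"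
| inv: "a \<in> division_closure S \<Longrightarrow> inverse a \<in> division_closure S"

text \<open>The division ring 'a, with the C-algebra structure given by the central ring
  homomorphism iota and elements x, y, is the free skew field C<(x,y)>:
  it is generated by C, x, y as a division ring, and (Cohn's characterisation of the
  universal field of fractions of the fir C<x,y>) every full matrix over the free
  algebra C<x,y> becomes invertible under evaluation.\<close>

definition free_skew_field :: "(complex \<Rightarrow> 'a::division_ring) \<Rightarrow> 'a \<Rightarrow> 'a \<Rightarrow> bool" where
  "free_skew_field \<iota> x y \<longleftrightarrow>
     (\<forall>a b. \<iota> (a + b) = \<iota> a + \<iota> b) \<and> (\<forall>a b. \<iota> (a * b) = \<iota> a * \<iota> b) \<and> \<iota> 1 = 1 \<and>
     (\<forall>a z. \<iota> a * z = z * \<iota> a) \<and>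
     division_closure (range \<iota> \<union> {x, y}) = UNIV \<and>
     (\<forall>n A. (\<forall>i<n. \<forall>j<n. is_ncpoly (A i j)) \<longrightarrow> full_matrix n A \<longrightarrow>
        invertible_over n (\<lambda>i j. nceval \<iota> x y (A i j)))"

text \<open>Motzkin paths of height at most 1 from (0,0) to (n,0), given by their list of
  heights h_0, ..., h_n.\<close>

definition motzkin1_paths :: "nat \<Rightarrow> nat list set" where
  "motzkin1_paths n = {h. length h = n + 1 \<and> set h \<subseteq> {0, 1} \<and> h ! 0 = 0 \<and> h ! n = 0}"

definition step_weight :: "'a \<Rightarrow> 'a \<Rightarrow> 'a \<Rightarrow> 'a \<Rightarrow> nat \<Rightarrow> nat \<Rightarrow> 'a" where
  "step_weight w00 w01 w10 w11 a b =
     (if a = 0 then (if b = 0 then w00 else w01) else (if b = 0 then w10 else w11))"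

definition path_weight :: "'a::monoid_mult \<Rightarrow> 'a \<Rightarrow> 'a \<Rightarrow> nat list \<Rightarrow> 'a" where
  "path_weight y1 y2 y3 h =
     prod_list (map (\<lambda>i. step_weight y1 1 y2 y3 (h ! i) (h ! (i + 1))) [0..<length h - 1])"

end

theory Submission
  imports Defs
begin

lemma canc:
  fixes a :: "'a::division_ring"
  assumes "a \<noteq> 0"
  shows "a * (inverse a * z) = z" "inverse a * (a * z) = z"
  using assms by (simp_all add: mult.assoc[symmetric])

definition Gf :: "'a::division_ring \<Rightarrow> 'a \<Rightarrow> 'a" where
  "Gf u v = (1 + inverse v) * inverse u * (1 + v) * inverse u + inverse v * u^2"

lemma comm_step:
  fixes a b c C p :: "'a::division_ring"
  assumes h1: "a*C*b = b*a" and h2: "c*C*b = 1 + p" and h3: "a*p = p*a" and "b\<noteq>0" "C\<noteq>0"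
  shows "c*C*a = a*c"
proof -
  have "(c*C*a - a*c)*(C*b) = c*C*(a*C*b) - a*(c*C*b)" by (simp add: algebra_simps)
  also have "\<dots> = c*C*(b*a) - a*(1+p)" using h1 h2 by simp
  also have "\<dots> = (c*C*b)*a - a*(1+p)" by (simp add: mult.assoc)
  also have "\<dots> = 0" using h2 h3 by (simp add: algebra_simps)
  finally have "(c*C*a - a*c)*(C*b) = 0" .
  moreover have "C*b \<noteq> 0" using assms by simp
  ultimately show ?thesis by simp
qed

lemma invC:
  fixes a b C :: "'a::division_ring"
  assumes "a*C*b = b*a" "a\<noteq>0" "b\<noteq>0" "C\<noteq>0"
  shows "inverse C = b * inverse a * inverse b * a"
proof -
  have "C*b = inverse a * (a*C*b)" using assms(2) by (simp add: mult.assoc canc)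
  also have "\<dots> = inverse a * (b*a)" using assms(1) by simp
  finally have Cb: "C*b = inverse a * (b*a)" .
  have "C * (b * inverse a * inverse b * a) = (C*b) * inverse a * inverse b * a" by (simp add: mult.assoc)
  also have "\<dots> = 1" using Cb assms by (simp add: mult.assoc canc)
  finally show ?thesis by (rule inverse_unique)
qed

lemma F1:
  fixes u v u' um vm C :: "'a::division_ring"
  assumes nz: "u\<noteq>0" "v\<noteq>0" "C\<noteq>0"
  and a: "u' * C * u = 1 + v" and a0: "u * C * um = 1 + vm" and b0: "v * C * vm = 1 + u^4"
  and c: "v * C * u = u * v"
  shows "u * Gf u v = u' * C + um"
proof -
  have uc: "u'*C = (1+v)*inverse u"
  proof -
    have "u'*C = u'*C*u*inverse u" using nz by (simp add: mult.assoc)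
    then show ?thesis using a by simp
  qed
  have Ci: "inverse C = u * inverse v * inverse u * v" by (rule invC[OF c nz(2,1,3)])
  have um': "um = inverse C * inverse u * (1 + vm)"
  proof -
    have "um = inverse C * inverse u * (u*C*um)" using nz by (simp add: mult.assoc canc)
    then show ?thesis using a0 by simp
  qed
  have vm': "vm = inverse C * inverse v * (1 + u^4)"
  proof -
    have "vm = inverse C * inverse v * (v*C*vm)" using nz by (simp add: mult.assoc canc)
    then show ?thesis using b0 by simp
  qed
  have "um = u * inverse v * inverse u * v * inverse u * (1 + u * inverse v * inverse u * v * inverse v * (1 + u^4))"
    using um' vm' Ci by simp
  then show ?thesis unfolding uc Gf_def
    using nz by (simp add: algebra_simps power2_eq_square power4_eq_xxxx canc)
qed

lemma Ginv:
  fixes u v w v' C :: "'a::division_ring"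
  assumes nz: "u\<noteq>0" "v\<noteq>0" "w\<noteq>0" "v'\<noteq>0" "C\<noteq>0"
  and a: "w*C*u = 1+v" and b: "v'*C*v = 1 + w^4" and c: "v*C*u = u*v" and d: "w*C*v = v*w"
  shows "Gf w v' = Gf u v"
proof -
  have Ci1: "inverse C = u * inverse v * inverse u * v" by (rule invC[OF c nz(2,1,5)])
  have Ci2: "inverse C = v * inverse w * inverse v * w" by (rule invC[OF d nz(3,2,5)])
  have wf0: "w = (1+v)*inverse u*inverse C"
  proof -
    have "w = w*C*u*inverse u*inverse C" using nz by (simp add: mult.assoc canc)
    then show ?thesis using a by simp
  qed
  have wf: "w = (1 + inverse v)*inverse u*v"
    using wf0 unfolding Ci1 using nz by (simp add: algebra_simps canc)
  have uf0: "u = inverse C * inverse w * (1+v)"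
  proof -
    have "u = inverse C * inverse w * (w*C*u)" using nz by (simp add: mult.assoc canc)
    then show ?thesis using a by simp
  qed
  have uf: "u = v*inverse w*(inverse v + 1)"
    using uf0 unfolding Ci2 using nz by (simp add: algebra_simps canc)
  have e1: "(1 + inverse v)*inverse u = w*inverse v"
    using nz by (subst wf) (simp add: mult.assoc)
  have T1: "(1 + inverse v) * inverse u * (1 + v) * inverse u = w*w*inverse v"
  proof -
    have "1 + v = v * (1 + inverse v)" using nz by (simp add: algebra_simps)
    then have "(1 + inverse v) * inverse u * (1 + v) * inverse u
        = ((1 + inverse v) * inverse u * v) * ((1 + inverse v) * inverse u)"
      by (simp add: mult.assoc)
    also have "\<dots> = w * (w * inverse v)" using wf e1 by simp
    finally show ?thesis by (simp add: mult.assoc)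
  qed
  have T2: "inverse v * u^2 = inverse w*(1+v)*inverse w*(inverse v + 1)"
    using nz by (subst uf) (simp add: algebra_simps power2_eq_square canc)
  have GL: "Gf u v = w*w*inverse v + inverse w*(1+v)*inverse w*(inverse v + 1)"
    unfolding Gf_def T1 T2 ..
  have v'f: "v' = (1+w^4)*inverse w*inverse v*w"
  proof -
    have "v' = v'*C*v*inverse v*inverse C" using nz by (simp add: mult.assoc canc)
    then have "v' = (1+w^4)*inverse v*inverse C" using b by simp
    then show ?thesis unfolding Ci2 using nz by (simp add: mult.assoc canc)
  qed
  have K1: "inverse v' * (1+w^4) = inverse w*v*w"
  proof -
    have "1 + w^4 = v' * (inverse w * v * w)"
      using nz by (subst v'f) (simp add: mult.assoc canc)
    then show ?thesis using nz by (simp add: mult.assoc[symmetric])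
  qed
  have GR: "Gf w v' = inverse w*inverse w + inverse w*v'*inverse w
       + (inverse v'*inverse w*inverse w + inverse v'*w*w) + inverse v'*inverse w*v'*inverse w"
    unfolding Gf_def by (simp add: algebra_simps power2_eq_square)
  have h1: "inverse w*v'*inverse w = (inverse w*inverse w + w*w)*inverse v"
    using nz by (subst v'f) (simp add: algebra_simps power4_eq_xxxx canc)
  have h2: "inverse v'*inverse w*inverse w + inverse v'*w*w = inverse w*v*inverse w"
  proof -
    have "inverse v'*inverse w*inverse w + inverse v'*w*w = (inverse v' * (1+w^4))*inverse w*inverse w"
      using nz by (simp add: algebra_simps power4_eq_xxxx canc)
    also have "\<dots> = inverse w*v*inverse w" unfolding K1 using nz by (simp add: mult.assoc canc)
    finally show ?thesis .
  qed
  have h3: "inverse v'*inverse w*v'*inverse w = inverse w*v*inverse w*inverse v"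
  proof -
    have iwv: "inverse w * v' = (1+w^4)*(inverse w*inverse w*inverse v*w)"
      using nz by (subst v'f) (simp add: algebra_simps power4_eq_xxxx canc)
    have "inverse v'*inverse w*v'*inverse w = inverse v'*(inverse w*v')*inverse w"
      by (simp add: mult.assoc)
    also have "\<dots> = (inverse v' * (1+w^4))*(inverse w*inverse w*inverse v*w)*inverse w"
      unfolding iwv by (simp add: mult.assoc)
    also have "\<dots> = inverse w*v*inverse w*inverse v" unfolding K1 using nz by (simp add: mult.assoc canc)
    finally show ?thesis .
  qed
  show ?thesis unfolding GR h1 h2 h3 GL using nz by (simp add: algebra_simps)
qed

lemma iota_0:
  fixes \<iota> :: "complex \<Rightarrow> 'a::division_ring"
  assumes "\<forall>a b. \<iota> (a + b) = \<iota> a + (\<iota> b :: 'a::division_ring)"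
  shows "\<iota> 0 = 0"
proof -
  have "\<iota> (0+0) = \<iota> 0 + \<iota> 0" using assms by blast
  then show ?thesis by simp
qed

lemma iota_neg:
  fixes \<iota> :: "complex \<Rightarrow> 'a::division_ring"
  assumes "\<forall>a b. \<iota> (a + b) = \<iota> a + (\<iota> b :: 'a::division_ring)"
  shows "\<iota> (- g) = - \<iota> g"
proof -
  have "\<iota> (g + - g) = \<iota> g + \<iota> (-g)" using assms by blast
  then show ?thesis using iota_0[OF assms] by (simp add: eq_neg_iff_add_eq_0 add.commute)
qed

lemma nonscalar:
  fixes \<iota> :: "complex \<Rightarrow> 'a::division_ring"
  assumes fs: "free_skew_field \<iota> x y"
  shows "x*y \<noteq> \<iota> g * (y*x)"
proof
  assume H: "x*y = \<iota> g * (y*x)"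
  have add: "\<forall>a b. \<iota> (a + b) = \<iota> a + \<iota> b" and one: "\<iota> 1 = 1"
    and full: "\<forall>n A. (\<forall>i<n. \<forall>j<n. is_ncpoly (A i j)) \<longrightarrow> full_matrix n A \<longrightarrow>
        invertible_over n (\<lambda>i j. nceval \<iota> x y (A i j))"
    using fs unfolding free_skew_field_def by auto
  define p :: ncpoly where "p = (\<lambda>w. if w = [False,True] then 1 else if w = [True,False] then - g else 0)"
  have supp: "{w. p w \<noteq> 0} \<subseteq> {[False,True],[True,False]}" unfolding p_def by auto
  have pc: "is_ncpoly p" unfolding is_ncpoly_def by (rule finite_subset[OF supp]) auto
  have fm: "full_matrix 1 (\<lambda>i j. p)"
    unfolding full_matrix_def
  proof
    assume "\<exists>(r::nat) (P::nat\<Rightarrow>nat\<Rightarrow>ncpoly) (Q::nat\<Rightarrow>nat\<Rightarrow>ncpoly). r < 1 \<and> (\<forall>i<1. \<forall>k<r. is_ncpoly (P i k)) \<and> (\<forall>k<r. \<forall>j<1. is_ncpoly (Q k j)) \<and>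
          (\<forall>i<1. \<forall>j<1. p = (\<lambda>w. \<Sum>k<r. ncmult (P i k) (Q k j) w))"
    then obtain r :: nat and P Q :: "nat \<Rightarrow> nat \<Rightarrow> ncpoly" where "r < 1" and "\<forall>i<1. \<forall>j<1. p = (\<lambda>w. \<Sum>k<r. ncmult (P i k) (Q k j) w)"
      by (elim exE conjE) (rule that, assumption+)
    then have "p = (\<lambda>w. \<Sum>k<r. ncmult (P 0 k) (Q k 0) w)" and "r = 0" by auto
    then have "p = (\<lambda>w. 0)" by simp
    then have "p [False,True] = 0" by simp
    then show False unfolding p_def by simp
  qed
  have "invertible_over 1 (\<lambda>i j. nceval \<iota> x y p)"
    using full pc fm by auto
  then obtain N where "nceval \<iota> x y p * N 0 0 = 1"
    unfolding invertible_over_def by auto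
  then have nz: "nceval \<iota> x y p \<noteq> 0" by auto
  have "nceval \<iota> x y p = (\<Sum>w\<in>{[False,True],[True,False]}. \<iota> (p w) * word_val x y w)"
    unfolding nceval_def
    by (rule sum.mono_neutral_left) (use supp iota_0[OF add] in auto)
  also have "\<dots> = x*y - \<iota> g * (y*x)"
    unfolding p_def word_val_def by (simp add: one iota_neg[OF add])
  finally show False using nz H by simp
qed

lemma scalar_root:
  fixes \<iota> :: "complex \<Rightarrow> 'a::division_ring"
  assumes add: "\<forall>a b. \<iota> (a + b) = \<iota> a + \<iota> b" and mul: "\<forall>a b. \<iota> (a * b) = \<iota> a * \<iota> b"
    and one: "\<iota> 1 = 1" and cen: "\<forall>a z. \<iota> a * z = z * \<iota> a"
    and t: "1 + t^4 = 0"
  shows "\<exists>c. t = \<iota> c"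
proof -
  have i0: "\<iota> 0 = 0"
  proof -
    have "\<iota> (0+0) = \<iota> 0 + \<iota> 0" using add by blast
    then show ?thesis by simp
  qed
  have ineg: "\<iota> (- g) = - \<iota> g" for g
  proof -
    have "\<iota> (g + - g) = \<iota> g + \<iota> (-g)" using add by blast
    then show ?thesis using i0 by (simp add: eq_neg_iff_add_eq_0 add.commute)
  qed
  define \<alpha> where "\<alpha> = Complex (1/sqrt 2) (1/sqrt 2)"
  define \<beta> where "\<beta> = Complex (1/sqrt 2) (-1/sqrt 2)"
  have aa: "\<alpha>*\<alpha> = \<i>" unfolding \<alpha>_def by (simp add: complex_eq_iff divide_simps)
  have bb: "\<beta>*\<beta> = - \<i>" unfolding \<beta>_def by (simp add: complex_eq_iff divide_simps)
  define A where "A = \<iota> \<alpha>"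
  define B where "B = \<iota> \<beta>"
  define I where "I = \<iota> \<i>"
  have AA: "A*A = I" unfolding A_def I_def using mul aa by metis
  have BB: "B*B = - I" unfolding B_def I_def using mul bb ineg by metis
  have II: "I*I = -1" unfolding I_def using mul ineg one by (metis complex_i_mult_minus mult.right_neutral mult_minus_right)
  have At: "A*t = t*A" unfolding A_def using cen by blast
  have Bt: "B*t = t*B" unfolding B_def using cen by blast
  have It: "I*(t*t) = t*t*I" unfolding I_def using cen by blast
  have f1: "(t - A)*(t + A) = t*t - I"
  proof -
    have "(t - A)*(t + A) = t*t + t*A - A*t - A*A" by (simp add: algebra_simps)
    then show ?thesis using At AA by simp
  qed
  have f2: "(t - B)*(t + B) = t*t + I"
  proof -
    have "(t - B)*(t + B) = t*t + t*B - B*t - B*B" by (simp add: algebra_simps)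
    then show ?thesis using Bt BB by simp
  qed
  have f3: "(t*t - I)*(t*t + I) = 1 + t^4"
  proof -
    have "(t*t - I)*(t*t + I) = t*t*(t*t) + t*t*I - I*(t*t) - I*I" by (simp add: algebra_simps)
    then show ?thesis using It II by (simp add: power4_eq_xxxx mult.assoc)
  qed
  have "((t - A)*(t + A))*((t - B)*(t + B)) = 0" using f1 f2 f3 t by simp
  then have "t - A = 0 \<or> t + A = 0 \<or> t - B = 0 \<or> t + B = 0" by auto
  then show ?thesis
  proof (elim disjE)
    assume "t - A = 0" then show ?thesis unfolding A_def by auto
  next
    assume "t + A = 0" then have "t = - A" by (simp add: eq_neg_iff_add_eq_0)
    then have "t = \<iota> (- \<alpha>)" unfolding A_def ineg .
    then show ?thesis by blast
  next
    assume "t - B = 0" then show ?thesis unfolding B_def by auto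
  next
    assume "t + B = 0" then have "t = - B" by (simp add: eq_neg_iff_add_eq_0)
    then have "t = \<iota> (- \<beta>)" unfolding B_def ineg .
    then show ?thesis by blast
  qed
qed
definition mpaths :: "nat \<Rightarrow> nat \<Rightarrow> nat list set" where
  "mpaths n e = {h. length h = n + 1 \<and> set h \<subseteq> {0, 1} \<and> h ! 0 = 0 \<and> h ! n = e}"

lemma mpaths_finite: "finite (mpaths n e)"
proof (rule finite_subset)
  show "mpaths n e \<subseteq> {h. set h \<subseteq> {0,1} \<and> length h = n+1}" unfolding mpaths_def by auto
  show "finite {h. set h \<subseteq> {0::nat,1} \<and> length h = n+1}" by (rule finite_lists_length_eq) simp
qed

lemma mpaths_Suc:
  assumes e: "e \<in> {0,1}"
  shows "mpaths (Suc n) e = (\<lambda>h. h @ [e]) ` (mpaths n 0 \<union> mpaths n 1)"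
proof
  show "mpaths (Suc n) e \<subseteq> (\<lambda>h. h @ [e]) ` (mpaths n 0 \<union> mpaths n 1)"
  proof
    fix h assume h: "h \<in> mpaths (Suc n) e"
    then have len: "length h = n + 2" and st: "set h \<subseteq> {0,1}" and h0: "h!0 = 0" and hn: "h ! Suc n = e"
      unfolding mpaths_def by auto
    have hne: "h \<noteq> []" using len by auto
    have hb: "h = butlast h @ [e]"
      using hne hn len by (metis append_butlast_last_id diff_Suc_1 last_conv_nth add_2_eq_Suc')
    have lb: "length (butlast h) = n + 1" using len by simp
    have sb: "set (butlast h) \<subseteq> {0,1}" using st by (meson in_set_butlastD subset_iff)
    have b0: "butlast h ! 0 = 0" using h0 lb by (simp add: nth_butlast)
    have "butlast h ! n \<in> set (butlast h)" using lb by simp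
    then have "butlast h ! n = 0 \<or> butlast h ! n = 1" using sb by auto
    then have "butlast h \<in> mpaths n 0 \<union> mpaths n 1" unfolding mpaths_def using lb sb b0 by auto
    then show "h \<in> (\<lambda>h. h @ [e]) ` (mpaths n 0 \<union> mpaths n 1)" using hb by blast
  qed
next
  show "(\<lambda>h. h @ [e]) ` (mpaths n 0 \<union> mpaths n 1) \<subseteq> mpaths (Suc n) e"
    unfolding mpaths_def using e by (auto simp: nth_append)
qed

lemma path_weight_snoc:
  assumes "length h = n + 1"
  shows "path_weight y1 y2 y3 (h @ [e]) = path_weight y1 y2 y3 h * step_weight y1 1 y2 y3 (h ! n) e"
proof -
  define f' where "f' = (\<lambda>i. step_weight y1 1 y2 y3 ((h @ [e]) ! i) ((h @ [e]) ! (i + 1)))"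
  define f where "f = (\<lambda>i. step_weight y1 1 y2 y3 (h ! i) (h ! (i + 1)))"
  have "path_weight y1 y2 y3 (h @ [e]) = prod_list (map f' ([0..<n] @ [n]))"
    unfolding path_weight_def f'_def using assms by simp
  also have "\<dots> = prod_list (map f' [0..<n]) * f' n" by simp
  also have "map f' [0..<n] = map f [0..<n]"
    unfolding f'_def f_def using assms by (auto simp: nth_append)
  also have "f' n = step_weight y1 1 y2 y3 (h ! n) e"
    unfolding f'_def using assms by (simp add: nth_append)
  also have "prod_list (map f [0..<n]) = path_weight y1 y2 y3 h"
    unfolding path_weight_def f_def using assms by simp
  finally show ?thesis .
qed

definition Sw :: "'a::semiring_1 \<Rightarrow> 'a \<Rightarrow> 'a \<Rightarrow> nat \<Rightarrow> nat \<Rightarrow> 'a" where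
  "Sw y1 y2 y3 n e = (\<Sum>h\<in>mpaths n e. path_weight y1 y2 y3 h)"

lemma Sw_Suc:
  fixes y1 y2 y3 :: "'a::semiring_1"
  assumes e: "e \<in> {0,1}"
  shows "Sw y1 y2 y3 (Suc n) e = Sw y1 y2 y3 n 0 * step_weight y1 1 y2 y3 0 e + Sw y1 y2 y3 n 1 * step_weight y1 1 y2 y3 1 e"
proof -
  have inj: "inj_on (\<lambda>h. h @ [e]) (mpaths n 0 \<union> mpaths n 1)" by (auto simp: inj_on_def)
  have disj: "mpaths n 0 \<inter> mpaths n 1 = {}" unfolding mpaths_def by auto
  have "Sw y1 y2 y3 (Suc n) e = (\<Sum>h\<in>mpaths n 0 \<union> mpaths n 1. path_weight y1 y2 y3 (h @ [e]))"
    unfolding Sw_def mpaths_Suc[OF e] by (subst sum.reindex[OF inj]) (simp add: comp_def)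
  also have "\<dots> = (\<Sum>h\<in>mpaths n 0. path_weight y1 y2 y3 (h @ [e])) + (\<Sum>h\<in>mpaths n 1. path_weight y1 y2 y3 (h @ [e]))"
    by (rule sum.union_disjoint[OF mpaths_finite mpaths_finite disj])
  also have "(\<Sum>h\<in>mpaths n 0. path_weight y1 y2 y3 (h @ [e])) = (\<Sum>h\<in>mpaths n 0. path_weight y1 y2 y3 h * step_weight y1 1 y2 y3 0 e)"
    by (rule sum.cong) (auto simp: mpaths_def path_weight_snoc)
  also have "(\<Sum>h\<in>mpaths n 1. path_weight y1 y2 y3 (h @ [e])) = (\<Sum>h\<in>mpaths n 1. path_weight y1 y2 y3 h * step_weight y1 1 y2 y3 1 e)"
    by (rule sum.cong) (auto simp: mpaths_def path_weight_snoc)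
  finally show ?thesis unfolding Sw_def by (simp add: sum_distrib_right)
qed

lemma Sw_0: "Sw y1 y2 y3 0 0 = (1::'a::semiring_1)" "Sw y1 y2 y3 0 1 = (0::'a::semiring_1)"
proof -
  have "mpaths 0 0 = {[0]}" unfolding mpaths_def by (auto simp: length_Suc_conv)
  then show "Sw y1 y2 y3 0 0 = (1::'a)" unfolding Sw_def path_weight_def by simp
  have "mpaths 0 1 = {}" unfolding mpaths_def by auto
  then show "Sw y1 y2 y3 0 1 = (0::'a)" unfolding Sw_def by simp
qed

lemma ident_main:
  fixes x y :: "'a::division_ring"
  assumes x: "x \<noteq> 0" and y: "y \<noteq> 0"
  and d1: "y1 = (1 + y) * inverse x * y * inverse x * inverse y"
  and d2: "y2 = (x ^ 2 + (1 + y) * inverse x ^ 2 * (1 + y)) * inverse y * inverse x * y * inverse x * inverse y"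
  and d3: "y3 = (x ^ 3 + (1 + y) * inverse x) * inverse x * inverse y"
  and dD: "D = (y*x*inverse y) * (x*y*inverse x*inverse y) * (y * inverse x * inverse y)"
  and dE: "E = (y*x*inverse y) * ((1+y)*inverse x*(1+y)*inverse x*inverse y + x*x*inverse y) * (y * inverse x * inverse y)"
  shows "y1*y1*D + y2*D = y1*E - 1" "y2*y1*D + y3*y2*D = y2*E"
  unfolding d1 d2 d3 dD dE
  by (simp_all add: algebra_simps power2_eq_square power3_eq_cube canc x y)

theorem theorem4p5:
  fixes \<iota> :: "complex \<Rightarrow> 'a::division_ring" and x y :: 'a and R :: "int \<Rightarrow> 'a"
  assumes "free_skew_field \<iota> x y"
    and "\<forall>n. R (2*n) * (x * y * inverse x * inverse y) * R (2*n - 2) = 1 + R (2*n - 1)"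
    and "\<forall>n. R (2*n + 1) * (x * y * inverse x * inverse y) * R (2*n - 1) = 1 + R (2*n) ^ 4"
    and "R 0 = y * x * inverse y"
    and "R 1 = y"
  shows "\<forall>n::nat. R (2 * int n) * inverse (R 0) =
     (\<Sum>h\<in>motzkin1_paths n.
        path_weight
          ((1 + y) * inverse x * y * inverse x * inverse y)
          ((x ^ 2 + (1 + y) * inverse x ^ 2 * (1 + y)) * inverse y * inverse x * y * inverse x * inverse y)
          ((x ^ 3 + (1 + y) * inverse x) * inverse x * inverse y)
          h)"
proof -
  define C where "C = x * y * inverse x * inverse y"
  have add: "\<forall>a b. \<iota> (a + b) = \<iota> a + \<iota> b"
    using assms(1) unfolding free_skew_field_def by blast
  have mul: "\<forall>a b. \<iota> (a * b) = \<iota> a * \<iota> b"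
    using assms(1) unfolding free_skew_field_def by blast
  have one: "\<iota> 1 = 1"
    using assms(1) unfolding free_skew_field_def by blast
  have cen: "\<forall>a z. \<iota> a * z = z * \<iota> a"
    using assms(1) unfolding free_skew_field_def by blast
  have ns: "x*y \<noteq> \<iota> g * (y*x)" for g using nonscalar[OF assms(1)] by blast
  have i0: "\<iota> 0 = 0" by (rule iota_0[OF add])
  have xy0: "x*y \<noteq> 0" using ns[of 0] i0 by simp
  then have x0: "x \<noteq> 0" and y0: "y \<noteq> 0" by auto
  have Cns: "C \<noteq> \<iota> g" for g
  proof
    assume H: "C = \<iota> g"
    have "C*(y*x) = x*y" unfolding C_def using x0 y0 by (simp add: mult.assoc canc)
    then show False using ns[of g] H by simp
  qed
  have C0: "C \<noteq> 0" using Cns[of 0] i0 by simp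
  have E1: "R(2*n)*C*R(2*n-2) = 1 + R(2*n-1)" for n using assms(2) unfolding C_def by blast
  have E2: "R(2*n+1)*C*R(2*n-1) = 1 + R(2*n)^4" for n using assms(3) unfolding C_def by blast
  have E1': "R(2*n+2)*C*R(2*n) = 1 + R(2*n+1)" for n
  proof -
    have h: "R(2*(n+1))*C*R(2*(n+1)-2) = 1 + R(2*(n+1)-1)" by (rule E1)
    have e: "2*(n+1) = 2*n+2" "2*n+2-2 = 2*n" "2*n+2-1 = 2*n+1" by simp_all
    show ?thesis using h by (simp only: e)
  qed
  have E2': "R(2*n+3)*C*R(2*n+1) = 1 + R(2*n+2)^4" for n
  proof -
    have h: "R(2*(n+1)+1)*C*R(2*(n+1)-1) = 1 + R(2*(n+1))^4" by (rule E2)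
    have e: "2*(n+1) = 2*n+2" "2*n+2+1 = 2*n+3" "2*n+2-1 = 2*n+1" by simp_all
    show ?thesis using h by (simp only: e)
  qed
  have Rev: "R(2*n) \<noteq> 0" for n
  proof
    assume H: "R(2*n) = 0"
    have m1: "R(2*n-1) = -1" using E1[of n] H by (simp add: eq_neg_iff_add_eq_0 add.commute)
    have "R(2*n+1)*C*R(2*n-1) = 1" using E2[of n] H by simp
    then have "- (R(2*n+1)*C) = 1" using m1 by simp
    then have "R(2*n+1)*C = -1" by (simp add: minus_equation_iff)
    moreover have "R(2*n+1) = -1" using E1'[of n] H by (simp add: eq_neg_iff_add_eq_0 add.commute)
    ultimately have "C = \<iota> 1" using one by simp
    then show False using Cns by blast
  qed
  have Rodd: "R(2*n+1) \<noteq> 0" for n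
  proof
    assume H: "R(2*n+1) = 0"
    have "1 + R(2*n)^4 = 0" using E2[of n] H by simp
    then obtain p where p: "R(2*n) = \<iota> p" using scalar_root[OF add mul one cen] by blast
    have "1 + R(2*n+2)^4 = 0" using E2'[of n] H by simp
    then obtain q where q: "R(2*n+2) = \<iota> q" using scalar_root[OF add mul one cen] by blast
    have "\<iota> q * C * \<iota> p = 1" using E1'[of n] H p q by simp
    moreover have "\<iota> q * C = C * \<iota> q" using cen by blast
    moreover have "\<iota> q * \<iota> p = \<iota> (q*p)" using mul by simp
    ultimately have h1: "C * \<iota> (q*p) = 1" by (simp add: mult.assoc)
    have qp: "q*p \<noteq> 0" using h1 i0 by auto
    have "\<iota> (q*p) * \<iota> (1/(q*p)) = \<iota> ((q*p) * (1/(q*p)))" by (rule mul[rule_format, symmetric])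
    also have "\<dots> = 1" using qp one by simp
    finally have h2: "\<iota> (q*p) * \<iota> (1/(q*p)) = 1" .
    have "C = C * (\<iota> (q*p) * \<iota> (1/(q*p)))" using h2 by simp
    also have "\<dots> = \<iota> (1/(q*p))" using h1 by (simp add: mult.assoc[symmetric])
    finally have "C = \<iota> (1/(q*p))" .
    then show False using Cns by blast
  qed
  have Rnz: "R m \<noteq> 0" for m
  proof -
    have "m = 2*(m div 2) \<or> m = 2*(m div 2)+1" by presburger
    then obtain n where "m = 2*n \<or> m = 2*n+1" by blast
    then show ?thesis using Rev Rodd by auto
  qed
  have stp: "\<exists>p. R(m+2)*C*R m = 1 + p \<and> R(m+1)*p = p*R(m+1)" for m
  proof -
    have "m = 2*(m div 2) \<or> m = 2*(m div 2)+1" by presburger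
    then obtain n where "m = 2*n \<or> m = 2*n+1" by blast
    then show ?thesis
    proof
      assume m: "m = 2*n"
      show ?thesis using E1'[of n] m by (intro exI[of _ "R(2*n+1)"]) simp
    next
      assume m: "m = 2*n+1"
      have "R(m+2)*C*R m = 1 + R(m+1)^4" using E2'[of n] m by (simp add: add.assoc)
      then show ?thesis by (intro exI[of _ "R(m+1)^4"]) (simp add: power_commutes)
    qed
  qed
  have inv: "R(int k+1)*C*R(int k) = R(int k)*R(int k+1)" for k
  proof (induction k)
    case 0
    show ?case unfolding C_def using assms(4,5) x0 y0 by (simp add: mult.assoc canc)
  next
    case (Suc k)
    obtain p where p: "R(int k+2)*C*R (int k) = 1 + p" "R(int k+1)*p = p*R(int k+1)" using stp by blast
    have "R(int k+2)*C*R(int k+1) = R(int k+1)*R(int k+2)"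
      by (rule comm_step[OF Suc.IH p(1) p(2) Rnz C0])
    moreover have "int (Suc k) + 1 = int k + 2" "int (Suc k) = int k + 1" by simp_all
    ultimately show ?case by (simp add: ac_simps)
  qed
  define U where "U n = R(2*int n)" for n
  define V where "V n = R(2*int n + 1)" for n
  have Unz: "U n \<noteq> 0" for n unfolding U_def by (rule Rnz)
  have Vnz: "V n \<noteq> 0" for n unfolding V_def by (rule Rnz)
  have A: "U(n+1)*C*U n = 1 + V n" for n
  proof -
    have "2*int (n+1) = 2*int n+2" by simp
    then show ?thesis unfolding U_def V_def using E1'[of "int n"] by (simp add: ac_simps)
  qed
  have B: "V(n+1)*C*V n = 1 + U(n+1)^4" for n
  proof -
    have "2*int (n+1) + 1 = 2*int n+3" "2*int (n+1) = 2*int n+2" by simp_all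
    then show ?thesis unfolding U_def V_def using E2'[of "int n"] by (simp add: ac_simps)
  qed
  have cc: "V n*C*U n = U n*V n" for n
    unfolding U_def V_def using inv[of "2*n"] by (simp add: ac_simps)
  have dd: "U(n+1)*C*V n = V n*U(n+1)" for n
  proof -
    have "int (2*n+1) + 1 = 2*int(n+1)" "int (2*n+1) = 2*int n + 1" by simp_all
    then show ?thesis unfolding U_def V_def using inv[of "2*n+1"] by (simp add: ac_simps)
  qed
  define G0 where "G0 = Gf (U 0) (V 0)"
  have Gc: "Gf (U n) (V n) = G0" for n
  proof (induction n)
    case 0 show ?case unfolding G0_def ..
  next
    case (Suc n)
    have "Gf (U (n+1)) (V (n+1)) = Gf (U n) (V n)"
      by (rule Ginv[OF Unz Vnz Unz Vnz C0 A B cc dd])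
    then show ?case using Suc by simp
  qed
  have rec: "U(n+2)*C = U(n+1)*G0 - U n" for n
  proof -
    have "U(n+1) * Gf (U(n+1)) (V(n+1)) = U(n+1+1)*C + U n"
      by (rule F1[OF Unz Vnz C0 A[of "n+1"] A[of n] B[of n] cc[of "n+1"]])
    then show ?thesis using Gc[of "n+1"] by (simp add: algebra_simps)
  qed
  have U0: "U 0 = y*x*inverse y" unfolding U_def using assms(4) by simp
  have V0: "V 0 = y" unfolding V_def using assms(5) by simp
  have iU0: "inverse (U 0) = y*inverse x*inverse y"
    unfolding U0 by (rule inverse_unique) (simp add: mult.assoc canc x0 y0)
  have iC: "inverse C = y*x*inverse y*inverse x"
    unfolding C_def by (rule inverse_unique) (simp add: mult.assoc canc x0 y0)
  have G0e: "G0 = (1+y)*inverse x*(1+y)*inverse x*inverse y + x*x*inverse y"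
    unfolding G0_def Gf_def iU0 unfolding U0 V0 using x0 y0
    by (simp add: algebra_simps power2_eq_square canc)
  define y1 where "y1 = (1 + y) * inverse x * y * inverse x * inverse y"
  define y2 where "y2 = (x ^ 2 + (1 + y) * inverse x ^ 2 * (1 + y)) * inverse y * inverse x * y * inverse x * inverse y"
  define y3 where "y3 = (x ^ 3 + (1 + y) * inverse x) * inverse x * inverse y"
  define D where "D = U 0 * C * inverse (U 0)"
  define E where "E = U 0 * G0 * inverse (U 0)"
  have iU0x: "inverse (y*x*inverse y) = y*inverse x*inverse y" using iU0 U0 by simp
  have De: "D = (y*x*inverse y) * (x*y*inverse x*inverse y) * (y * inverse x * inverse y)"
    unfolding D_def U0 iU0x C_def ..
  have Ee: "E = (y*x*inverse y) * ((1+y)*inverse x*(1+y)*inverse x*inverse y + x*x*inverse y) * (y * inverse x * inverse y)"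
    unfolding E_def U0 iU0x G0e ..
  have id1: "y1*y1*D + y2*D = y1*E - 1" by (rule ident_main(1)[OF x0 y0 y1_def y2_def y3_def De Ee])
  have id2: "y2*y1*D + y3*y2*D = y2*E" by (rule ident_main(2)[OF x0 y0 y1_def y2_def y3_def De Ee])
  define a where "a n = U n * inverse (U 0)" for n
  have arec: "a(n+2)*D = a(n+1)*E - a n" for n
  proof -
    have "a(n+2)*D = U(n+2)*C*inverse (U 0)"
      unfolding a_def D_def using Unz[of 0] by (simp add: mult.assoc canc)
    also have "\<dots> = (U(n+1)*G0 - U n)*inverse (U 0)" using rec by simp
    also have "\<dots> = a(n+1)*E - a n"
      unfolding a_def E_def using Unz[of 0] by (simp add: mult.assoc canc algebra_simps)
    finally show ?thesis .
  qed
  define S where "S n = Sw y1 y2 y3 n 0" for n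
  define T where "T n = Sw y1 y2 y3 n 1" for n
  have S_Suc: "S(Suc n) = S n * y1 + T n * y2" for n
    unfolding S_def T_def using Sw_Suc[of 0 y1 y2 y3 n] by (simp add: step_weight_def)
  have T_Suc: "T(Suc n) = S n + T n * y3" for n
    unfolding S_def T_def using Sw_Suc[of 1 y1 y2 y3 n] by (simp add: step_weight_def)
  have Srec: "S(n+2)*D = S(n+1)*E - S n" for n
  proof -
    have "S(n+2)*D = S n * (y1*y1*D + y2*D) + T n*(y2*y1*D + y3*y2*D)"
      by (simp add: S_Suc T_Suc algebra_simps)
    also have "\<dots> = S(n+1)*E - S n" unfolding id1 id2 by (simp add: S_Suc algebra_simps)
    finally show ?thesis .
  qed
  have S0: "S 0 = 1" and T0: "T 0 = 0" unfolding S_def T_def using Sw_0 by auto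
  have a0: "a 0 = 1" unfolding a_def using Unz[of 0] by simp
  have a1: "a 1 = y1"
  proof -
    have "U 1 * (C * U 0) = 1 + y" using A[of 0] V0 by (simp add: mult.assoc)
    moreover have "U 1 = U 1 * (C * U 0) * inverse (C * U 0)"
    proof -
      have cu: "C * U 0 \<noteq> 0" using C0 Unz[of 0] by simp
      show ?thesis using cu by (metis mult.assoc mult.right_neutral right_inverse)
    qed
    ultimately have "U 1 = (1 + y) * inverse (C * U 0)" by simp
    then have "a 1 = (1 + y) * (inverse (U 0) * inverse C) * inverse (U 0)"
      unfolding a_def using C0 Unz[of 0] by (simp add: nonzero_inverse_mult_distrib)
    also have "\<dots> = y1" unfolding iU0 iC y1_def using x0 y0 by (simp add: algebra_simps canc)
    finally show ?thesis .
  qed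
  have D0: "D \<noteq> 0" unfolding D_def using Unz[of 0] C0 by simp
  have main: "a n = S n \<and> a (n+1) = S (n+1)" for n
  proof (induction n)
    case 0 show ?case using a0 a1 S0 T0 S_Suc[of 0] by simp
  next
    case (Suc n)
    have "a(n+2)*D = S(n+2)*D" using arec[of n] Srec[of n] Suc by simp
    then have "a(n+2) = S(n+2)" using D0 by simp
    then show ?case using Suc by simp
  qed
  have fin: "\<forall>n. R (2 * int n) * inverse (R 0) = (\<Sum>h\<in>motzkin1_paths n. path_weight y1 y2 y3 h)"
  proof
    fix n
    have "R (2 * int n) * inverse (R 0) = S n" using main[of n] unfolding a_def U_def by simp
    moreover have "motzkin1_paths n = mpaths n 0" unfolding motzkin1_paths_def mpaths_def ..
    ultimately show "R (2 * int n) * inverse (R 0) = (\<Sum>h\<in>motzkin1_paths n. path_weight y1 y2 y3 h)"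
      unfolding S_def Sw_def by simp
  qed
  then show ?thesis unfolding y1_def y2_def y3_def .
qed

end
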